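(* Let $q(x)\in\mathbb{Z}[x]$ be monic and let $\mathrm{sym}(q)(x)=x^{\deg q}\,q\!\left(x+\frac1x\right)$. Then $\mathrm{sym}(q)$ is symplectically irreducible if and only if $q(x)$ is irreducible over $\mathbb{Z}$.
   Context: A symplectic polynomial is an integer polynomial that is the characteristic polynomial of some element of $\mathrm{Sp}(2n,\mathbb{Z})$; equivalently, an even-degree integer polynomial $a_{2n}x^{2n}+\cdots+a_0$ that is monic ($a_{2n}=1$) and palindromic ($a_i=a_{2n-i}$). A symplectic polynomial is symplectically irreducible if it is not the product of two nontrivial symplectic polynomials. *)

theory Defs
  imports "HOL-Computational_Algebra.Polynomial_Factorial"
begin

definition symplectic_poly :: "int poly \<Rightarrow> bool" where
  "symplectic_poly p \<longleftrightarrow> even (degree p) \<and> lead_coeff p = 1 \<and>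
     (\<forall>i\<le>degree p. coeff p i = coeff p (degree p - i))"

definition symp_irreducible :: "int poly \<Rightarrow> bool" where
  "symp_irreducible p \<longleftrightarrow> symplectic_poly p \<and> degree p > 0 \<and>
     \<not> (\<exists>f g. symplectic_poly f \<and> symplectic_poly g \<and> degree f > 0 \<and> degree g > 0
              \<and> p = f * g)"

text \<open>sym(q)(x) = x^(deg q) q(x + 1/x) = sum_i q_i x^(deg q - i) (x^2+1)^i.\<close>
definition sym_poly :: "int poly \<Rightarrow> int poly" where
  "sym_poly q = (\<Sum>i\<le>degree q. smult (coeff q i) ([:1, 0, 1:] ^ i * monom 1 (degree q - i)))"

end

theory Submission imports Defs begin

definition symh :: "nat \<Rightarrow> int poly \<Rightarrow> int poly" where
  "symh n q = (\<Sum>i\<le>n. smult (coeff q i) ([:1,0,1:]^i * monom 1 (n-i)))"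

lemma sym_poly_symh: "sym_poly q = symh (degree q) q"
  by (simp add: sym_poly_def symh_def)

lemma symh_0: "symh 0 q = [:coeff q 0:]"
  by (simp add: symh_def monom_0)

lemma symh_add: "symh n (p + q) = symh n p + symh n q"
  by (simp add: symh_def sum.distrib smult_add_left)

lemma smult_sum_right: "smult c (sum f A) = (\<Sum>x\<in>A. smult c (f x))"
  by (induct A rule: infinite_finite_induct) (auto simp: smult_add_right)

lemma symh_smult: "symh n (smult c p) = smult c (symh n p)"
  by (simp add: symh_def smult_sum_right)

lemma symh_zero[simp]: "symh n 0 = 0"
  by (simp add: symh_def)

lemma symh_Suc_X: assumes "degree q \<le> n" shows "symh (Suc n) q = [:0,1:] * symh n q"
proof -
  have "symh (Suc n) q = (\<Sum>i\<le>n. smult (coeff q i) ([:1,0,1:]^i * monom 1 (Suc n-i)))"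
    using assms by (simp add: symh_def coeff_eq_0)
  also have "\<dots> = (\<Sum>i\<le>n. [:0,1:] * smult (coeff q i) ([:1,0,1:]^i * monom 1 (n-i)))"
  proof (rule sum.cong[OF refl])
    fix i assume "i \<in> {..n}"
    then have "Suc n - i = Suc (n - i)" by auto
    then show "smult (coeff q i) ([:1,0,1:]^i * monom 1 (Suc n-i)) = [:0,1:] * smult (coeff q i) ([:1,0,1:]^i * monom 1 (n-i))"
      by (simp add: monom_altdef algebra_simps)
  qed
  also have "\<dots> = [:0,1:] * symh n q" by (simp add: symh_def sum_distrib_left)
  finally show ?thesis .
qed

lemma symh_pCons: "symh (Suc n) (pCons c a) = monom c (Suc n) + [:1,0,1:] * symh n a"
proof -
  have "symh (Suc n) (pCons c a) = smult c (monom 1 (Suc n)) + (\<Sum>i\<le>n. smult (coeff (pCons c a) (Suc i)) ([:1,0,1:]^(Suc i) * monom 1 (Suc n- Suc i)))"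
    unfolding symh_def by (subst sum.atMost_Suc_shift) simp
  also have "\<dots> = monom c (Suc n) + [:1,0,1:] * symh n a"
    by (simp add: symh_def sum_distrib_left smult_monom algebra_simps)
  finally show ?thesis .
qed

lemma symh_X_pow: assumes "degree q \<le> n" shows "symh (n + k) q = [:0,1:]^k * symh n q"
  using assms by (induction k) (auto simp: symh_Suc_X)

lemma symh_mult: "degree a \<le> m \<Longrightarrow> degree b \<le> n \<Longrightarrow> symh (m + n) (a * b) = symh m a * symh n b"
proof (induction m arbitrary: a)
  case 0
  then obtain c where a: "a = [:c:]" by (metis degree_0_id le_0_eq)
  show ?case using 0 by (simp add: a symh_smult symh_0)
next
  case (Suc m)
  obtain c a' where a: "a = pCons c a'" by (cases a)
  have da: "degree a' \<le> m" using Suc.prems a by (cases "a' = 0") auto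
  have ab: "a * b = smult c b + pCons 0 (a' * b)" by (simp add: a)
  have "symh (Suc m + n) (a*b) = smult c (symh (Suc m + n) b) + symh (Suc (m + n)) (pCons 0 (a' * b))"
    by (simp add: ab symh_add symh_smult)
  also have "\<dots> = smult c ([:0,1:]^(Suc m) * symh n b) + [:1,0,1:] * (symh m a' * symh n b)"
  proof -
    have "symh (Suc m + n) b = [:0,1:]^(Suc m) * symh n b"
      using symh_X_pow[of b n "Suc m"] Suc.prems by (simp add: add.commute)
    moreover have "symh (Suc (m + n)) (pCons 0 (a' * b)) = [:1,0,1:] * (symh m a' * symh n b)"
      using Suc.IH[OF da] Suc.prems by (simp add: symh_pCons)
    ultimately show ?thesis by simp
  qed
  also have "\<dots> = symh (Suc m) a * symh n b"
    by (simp add: a symh_pCons algebra_simps monom_altdef)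
  finally show ?case .
qed

definition pal :: "nat \<Rightarrow> int poly \<Rightarrow> bool" where
  "pal n p \<longleftrightarrow> degree p \<le> 2*n \<and> (\<forall>i\<le>2*n. coeff p i = coeff p (2*n - i))"

lemma palI: "degree p \<le> 2*n \<Longrightarrow> (\<And>i. i \<le> 2*n \<Longrightarrow> coeff p i = coeff p (2*n - i)) \<Longrightarrow> pal n p"
  unfolding pal_def by blast

lemma palD: "pal n p \<Longrightarrow> i \<le> 2*n \<Longrightarrow> coeff p i = coeff p (2*n - i)"
  unfolding pal_def by blast

lemma palD2: "pal n p \<Longrightarrow> degree p \<le> 2*n"
  unfolding pal_def by blast

lemma pal_add: assumes "pal n p" "pal n q" shows "pal n (p + q)"
proof (rule palI)
  show "degree (p + q) \<le> 2*n" using palD2[OF assms(1)] palD2[OF assms(2)] by (rule degree_add_le)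
  fix i assume i: "i \<le> 2*n"
  show "coeff (p + q) i = coeff (p + q) (2*n - i)"
    using palD[OF assms(1) i] palD[OF assms(2) i] unfolding coeff_add by linarith
qed

lemma pal_diff: assumes "pal n p" "pal n q" shows "pal n (p - q)"
proof (rule palI)
  show "degree (p - q) \<le> 2*n" using palD2[OF assms(1)] palD2[OF assms(2)] by (rule degree_diff_le)
  fix i assume i: "i \<le> 2*n"
  show "coeff (p - q) i = coeff (p - q) (2*n - i)"
    using palD[OF assms(1) i] palD[OF assms(2) i] unfolding coeff_diff by linarith
qed

lemma pal_smult: assumes "pal n p" shows "pal n (smult c p)"
proof (rule palI)
  show "degree (smult c p) \<le> 2*n" using palD2[OF assms(1)] degree_smult_le[of c p] by linarith
  fix i assume i: "i \<le> 2*n"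
  show "coeff (smult c p) i = coeff (smult c p) (2*n - i)"
    using palD[OF assms(1) i] unfolding coeff_smult by metis
qed

lemma pal_monom: "pal n (monom c n)"
  unfolding pal_def using degree_monom_le[of c n] by (auto simp: coeff_monom)

lemma coeff_S: "coeff ([:1,0,1:] * (p::int poly)) i = coeff p i + (if 2 \<le> i then coeff p (i - 2) else 0)"
proof -
  have e: "[:1,0,1:] * p = p + pCons 0 (pCons 0 p)" by (simp add: algebra_simps)
  show ?thesis
  proof (cases i)
    case 0 then show ?thesis by (simp add: e)
  next
    case (Suc j) then show ?thesis by (cases j) (simp_all add: e)
  qed
qed

lemma pal_S: assumes "pal n p" shows "pal (Suc n) ([:1,0,1:] * p)"
proof -
  have d: "degree p \<le> 2*n" using palD2[OF assms] .
  have h: "\<And>i. i \<le> 2*n \<Longrightarrow> coeff p i = coeff p (2*n - i)" using palD[OF assms] .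
  have z: "\<And>k. 2*n < k \<Longrightarrow> coeff p k = 0" using d by (intro coeff_eq_0) simp
  have "degree ([:1,0,1:] * p) \<le> 2 + degree p"
    using degree_mult_le[of "[:1,0,1:]" p] by simp
  then have dd: "degree ([:1,0,1:] * p) \<le> 2 * Suc n" using d by simp
  have hh: "coeff ([:1,0,1:] * p) i = coeff ([:1,0,1:] * p) (2 * Suc n - i)" if i: "i \<le> 2 * Suc n" for i
  proof -
    define j where "j = 2 * Suc n - i"
    have ij: "i + j = 2 * Suc n" using i by (simp add: j_def)
    have L: "coeff ([:1,0,1:] * p) i = coeff p i + (if 2 \<le> i then coeff p (i - 2) else 0)" by (rule coeff_S)
    have R: "coeff ([:1,0,1:] * p) j = coeff p j + (if 2 \<le> j then coeff p (j - 2) else 0)" by (rule coeff_S)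
    consider "i = 0" | "i = 1" | "2 \<le> i \<and> 2 \<le> j" | "j = 1" | "j = 0" using ij by linarith
    then have "coeff ([:1,0,1:] * p) i = coeff ([:1,0,1:] * p) j"
    proof cases
      case 1
      then have "j = 2*n + 2" using ij by simp
      then have "coeff p j = 0" "j - 2 = 2*n" "2 \<le> j" using z[of j] by auto
      then show ?thesis using L R 1 h[of 0] by simp
    next
      case 2
      then have j: "j = 2*n + 1" using ij by simp
      then have a: "coeff p j = 0" using z[of j] by auto
      show ?thesis
      proof (cases n)
        case 0
        then have "coeff p 1 = 0" using z[of 1] by simp
        then show ?thesis using L R 2 a j 0 by simp
      next
        case (Suc m)
        then have "j - 2 = 2*n - 1" "2 \<le> j" using j by auto
        then show ?thesis using L R 2 a h[of 1] Suc by simp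
      qed
    next
      case 3
      then have e1: "j = 2*n - (i - 2)" and e2: "j - 2 = 2*n - i" and c: "i \<le> 2*n" "i - 2 \<le> 2*n"
        using ij by auto
      have A: "coeff p i = coeff p (j - 2)" using h[OF c(1)] e2 by simp
      have B: "coeff p (i - 2) = coeff p j" using h[OF c(2)] e1 by simp
      show ?thesis using L R 3 A B by simp
    next
      case 4
      then have i2: "i = 2*n + 1" using ij by simp
      then have a: "coeff p i = 0" using z[of i] by auto
      show ?thesis
      proof (cases n)
        case 0
        then have "coeff p 1 = 0" using z[of 1] by simp
        then show ?thesis using L R 4 a i2 0 by simp
      next
        case (Suc m)
        then have "i - 2 = 2*n - 1" "2 \<le> i" using i2 by auto
        then show ?thesis using L R 4 a h[of 1] Suc by simp
      qed
    next
      case 5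
      then have "i = 2*n + 2" using ij by simp
      then have "coeff p i = 0" "i - 2 = 2*n" "2 \<le> i" using z[of i] by auto
      then show ?thesis using L R 5 h[of 0] by simp
    qed
    then show ?thesis by (simp add: j_def)
  qed
  show ?thesis by (rule palI[OF dd hh])
qed

lemma pal_symh: "pal n (symh n q)"
proof (induction n arbitrary: q)
  case 0
  then show ?case by (simp add: symh_0 pal_def)
next
  case (Suc n)
  obtain c a where "q = pCons c a" by (cases q)
  then show ?case by (simp only: symh_pCons) (intro pal_add pal_monom pal_S Suc.IH)
qed

lemma coeff_symh_top: "degree q \<le> n \<Longrightarrow> coeff (symh n q) (2*n) = coeff q n"
proof (induction n arbitrary: q)
  case 0
  then show ?case by (simp add: symh_0)
next
  case (Suc n)
  obtain c a where q: "q = pCons c a" by (cases q)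
  have da: "degree a \<le> n" using Suc.prems q by (cases "a = 0") auto
  have "degree (symh n a) \<le> 2*n" using pal_symh[of n a] by (simp add: pal_def)
  then have "coeff (symh n a) (2*n+2) = 0" by (intro coeff_eq_0) simp
  then show ?case using Suc.IH[OF da] q by (simp add: symh_pCons coeff_S coeff_monom)
qed

lemma degree_symh: "degree q \<le> n \<Longrightarrow> coeff q n \<noteq> 0 \<Longrightarrow> degree (symh n q) = 2*n"
proof -
  assume a: "degree q \<le> n" "coeff q n \<noteq> 0"
  have "coeff (symh n q) (2*n) \<noteq> 0" using coeff_symh_top[OF a(1)] a(2) by simp
  then have "2*n \<le> degree (symh n q)" by (rule le_degree)
  moreover have "degree (symh n q) \<le> 2*n" by (rule palD2[OF pal_symh])
  ultimately show ?thesis by (rule antisym[rotated])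
qed

lemma symh_monom: "symh n (monom c n) = smult c ([:1,0,1:]^n)"
  by (cases n) (simp_all add: symh_def coeff_monom)

lemma degree_drop: "degree (p::int poly) \<le> Suc k \<Longrightarrow> coeff p (Suc k) = 0 \<Longrightarrow> degree p \<le> k"
proof -
  assume a: "degree (p::int poly) \<le> Suc k" "coeff p (Suc k) = 0"
  show ?thesis
  proof (rule ccontr)
    assume "\<not> degree p \<le> k"
    then have "degree p = Suc k" using a(1) by simp
    then have "lead_coeff p = 0" using a(2) by simp
    then have "p = 0" by simp
    then show False using \<open>degree p = Suc k\<close> by simp
  qed
qed

lemma pal_exists: "pal n p \<Longrightarrow> \<exists>q. degree q \<le> n \<and> p = symh n q"
proof (induction n arbitrary: p)
  case 0
  then have d0: "degree p = 0" using palD2 by fastforce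
  then have "p = symh 0 p" by (simp add: symh_0 degree_0_id)
  then show ?case using d0 by (intro exI[of _ p]) simp
next
  case (Suc n)
  define c where "c = coeff p (2*n+2)"
  define S where "S = symh (Suc n) (monom 1 (Suc n))"
  have S: "S = [:1,0,1:]^(Suc n)" by (simp add: S_def symh_monom)
  have cS: "coeff S (2*Suc n) = 1" unfolding S_def
    by (subst coeff_symh_top) (auto simp: degree_monom_le)
  define p1 where "p1 = p - smult c S"
  have pal1: "pal (Suc n) p1" unfolding p1_def S_def
    by (intro pal_diff pal_smult Suc.prems pal_symh)
  have top: "coeff p1 (2*n+2) = 0" using cS by (simp add: p1_def c_def)
  have bot: "coeff p1 0 = 0" using palD[OF pal1, of 0] top by (simp add: add.commute)
  obtain r where p1r: "p1 = pCons 0 r" using bot by (cases p1) auto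
  have dp1: "degree p1 \<le> Suc (2*n+1)" using palD2[OF pal1] by simp
  have dp1': "degree p1 \<le> 2*n+1" using degree_drop[OF dp1] top by simp
  have dr: "degree r \<le> 2*n" using dp1' p1r by (cases "r = 0") auto
  have rr: "coeff r i = coeff r (2*n - i)" if "i \<le> 2*n" for i
  proof -
    have "coeff p1 (Suc i) = coeff p1 (2 * Suc n - Suc i)" using palD[OF pal1, of "Suc i"] that by simp
    moreover have "2 * Suc n - Suc i = Suc (2*n - i)" using that by simp
    ultimately show ?thesis using p1r by simp
  qed
  have "pal n r" by (rule palI[OF dr rr])
  then obtain q' where q': "degree q' \<le> n" "r = symh n q'" using Suc.IH by blast
  have "p = smult c S + p1" by (simp add: p1_def)
  also have "\<dots> = symh (Suc n) (monom c (Suc n)) + symh (Suc n) q'"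
    using symh_Suc_X[OF q'(1)] p1r q'(2) symh_monom[of "Suc n" c] S by simp
  also have "\<dots> = symh (Suc n) (monom c (Suc n) + q')" by (simp only: symh_add)
  finally have pe: "p = symh (Suc n) (monom c (Suc n) + q')" .
  have "degree (monom c (Suc n) + q') \<le> Suc n"
    using q'(1) degree_monom_le[of c "Suc n"] by (intro degree_add_le) simp_all
  then show ?case using pe by blast
qed

lemma symh_eq0: "degree c \<le> n \<Longrightarrow> symh n c = 0 \<Longrightarrow> c = 0"
proof (induction n arbitrary: c)
  case 0
  then show ?case by (metis degree_0_id le_0_eq symh_0)
next
  case (Suc n)
  have "coeff c (Suc n) = 0" using coeff_symh_top[OF Suc.prems(1)] Suc.prems(2) by simp
  then have dc: "degree c \<le> n" using degree_drop Suc.prems(1) by blast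
  then have "symh n c = 0" using Suc.prems(2) by (simp add: symh_Suc_X)
  then show ?case using Suc.IH dc by blast
qed

lemma symh_inj: "degree a \<le> n \<Longrightarrow> degree b \<le> n \<Longrightarrow> symh n a = symh n b \<Longrightarrow> a = b"
  using symh_eq0[of "a - b" n] symh_add[of n "a - b" b]
  by (simp add: degree_diff_le)

lemma symp_of_monic: assumes "lead_coeff q = 1"
  shows "symplectic_poly (symh (degree q) q) \<and> degree (symh (degree q) q) = 2 * degree q"
proof -
  have d: "degree (symh (degree q) q) = 2 * degree q" using assms by (intro degree_symh) auto
  have l: "lead_coeff (symh (degree q) q) = 1" using d assms coeff_symh_top[of q "degree q"] by simp
  have "\<forall>i\<le>degree (symh (degree q) q). coeff (symh (degree q) q) i = coeff (symh (degree q) q) (degree (symh (degree q) q) - i)"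
    unfolding d using palD[OF pal_symh[of "degree q" q]] by blast
  moreover have "even (degree (symh (degree q) q))" using d by simp
  ultimately show ?thesis unfolding symplectic_poly_def using d l by blast
qed

lemma symp_is_symh: assumes "symplectic_poly p"
  shows "\<exists>a. lead_coeff a = 1 \<and> degree p = 2 * degree a \<and> p = symh (degree a) a"
proof -
  have "even (degree p)" using assms unfolding symplectic_poly_def by blast
  then obtain m where m: "degree p = 2*m" by (rule evenE)
  have "pal m p"
  proof (rule palI)
    show "degree p \<le> 2*m" using m by simp
    fix i assume "i \<le> 2*m"
    then show "coeff p i = coeff p (2*m - i)" using assms m unfolding symplectic_poly_def by metis
  qed
  then obtain a where a: "degree a \<le> m" "p = symh m a" using pal_exists by blast
  have "lead_coeff p = 1" using assms unfolding symplectic_poly_def by blast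
  then have "coeff a m = 1" using coeff_symh_top[OF a(1)] a(2) m by simp
  then have "degree a = m" using a(1) by (metis le_antisym le_degree zero_neq_one)
  then show ?thesis using a m \<open>coeff a m = 1\<close> by auto
qed

lemma unit_iff_deg0: assumes "lead_coeff (a::int poly) = 1 \<or> lead_coeff a = -1"
  shows "a dvd 1 \<longleftrightarrow> degree a = 0"
  using assms by (auto simp: is_unit_poly_iff elim!: degree_eq_zeroE)

theorem lemma3p1:
  fixes q :: "int poly"
  assumes "lead_coeff q = 1"
  shows "symp_irreducible (sym_poly q) \<longleftrightarrow> irreducible q"
proof
  assume H: "symp_irreducible (sym_poly q)"
  have sq: "sym_poly q = symh (degree q) q" by (rule sym_poly_symh)
  have dq: "degree q > 0" using H symp_of_monic[OF assms] by (auto simp: symp_irreducible_def sq)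
  show "irreducible q"
  proof (rule irreducibleI)
    show "q \<noteq> 0" using assms by auto
    show "\<not> q dvd 1" using dq assms unit_iff_deg0[of q] by auto
    fix a b assume qab: "q = a * b"
    show "a dvd 1 \<or> b dvd 1"
    proof (rule ccontr)
      assume nu: "\<not> (a dvd 1 \<or> b dvd 1)"
      have lab: "lead_coeff a * lead_coeff b = 1" using assms qab by (simp add: lead_coeff_mult)
      then have la: "lead_coeff a = 1 \<or> lead_coeff a = -1" by (auto simp: zmult_eq_1_iff)
      have lb: "lead_coeff b = 1 \<or> lead_coeff b = -1" using lab by (auto simp: zmult_eq_1_iff)
      define a' where "a' = smult (lead_coeff a) a"
      define b' where "b' = smult (lead_coeff b) b"
      have a'b': "q = a' * b'" using qab lab by (simp add: a'_def b'_def mult.commute mult.left_commute)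
      have da: "degree a' = degree a" "lead_coeff a' = 1" using la by (auto simp: a'_def)
      have db: "degree b' = degree b" "lead_coeff b' = 1" using lb by (auto simp: b'_def)
      have pa: "degree a > 0" using nu la unit_iff_deg0[of a] by auto
      have pb: "degree b > 0" using nu lb unit_iff_deg0[of b] by auto
      have "a \<noteq> 0" "b \<noteq> 0" using pa pb by auto
      then have dd: "degree q = degree a' + degree b'" using qab da db by (simp add: degree_mult_eq)
      have "sym_poly q = symh (degree a') a' * symh (degree b') b'"
        using sq dd a'b' symh_mult[of a' "degree a'" b' "degree b'"] by simp
      moreover have "symplectic_poly (symh (degree a') a')" "degree (symh (degree a') a') > 0"
        using symp_of_monic[OF da(2)] da pa by auto
      moreover have "symplectic_poly (symh (degree b') b')" "degree (symh (degree b') b') > 0"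
        using symp_of_monic[OF db(2)] db pb by auto
      ultimately show False using H unfolding symp_irreducible_def by blast
    qed
  qed
next
  assume I: "irreducible q"
  have sq: "sym_poly q = symh (degree q) q" by (rule sym_poly_symh)
  have dq: "degree q > 0" using I assms unit_iff_deg0[of q] by (auto simp: irreducible_def)
  have sp: "symplectic_poly (sym_poly q)" "degree (sym_poly q) = 2 * degree q"
    using symp_of_monic[OF assms] sq by auto
  show "symp_irreducible (sym_poly q)"
    unfolding symp_irreducible_def
  proof (intro conjI notI)
    show "symplectic_poly (sym_poly q)" by (rule sp(1))
    show "degree (sym_poly q) > 0" using sp dq by simp
    assume "\<exists>f g. symplectic_poly f \<and> symplectic_poly g \<and> 0 < degree f \<and> 0 < degree g \<and> sym_poly q = f * g"
    then obtain f g where fg: "symplectic_poly f" "symplectic_poly g" "0 < degree f" "0 < degree g" "sym_poly q = f * g"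
      by blast
    obtain a where a: "lead_coeff a = 1" "degree f = 2 * degree a" "f = symh (degree a) a"
      using symp_is_symh[OF fg(1)] by blast
    obtain b where b: "lead_coeff b = 1" "degree g = 2 * degree b" "g = symh (degree b) b"
      using symp_is_symh[OF fg(2)] by blast
    have "f \<noteq> 0" "g \<noteq> 0" using fg by auto
    then have "degree (sym_poly q) = degree f + degree g" using fg(5) by (simp add: degree_mult_eq)
    then have dqab: "degree q = degree a + degree b" using sp a b by simp
    have ab0: "a \<noteq> 0" "b \<noteq> 0" using a b by auto
    have "symh (degree q) q = symh (degree q) (a * b)"
      using sq fg(5) a(3) b(3) dqab symh_mult[of a "degree a" b "degree b"] by simp
    then have "q = a * b"
      by (rule symh_inj[rotated 2]) (auto simp: degree_mult_eq ab0 dqab)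
    then have "a dvd 1 \<or> b dvd 1" using I by (simp add: irreducibleD)
    moreover have "degree a > 0" "degree b > 0" using a b fg by auto
    ultimately show False using a b unit_iff_deg0[of a] unit_iff_deg0[of b] by auto
  qed
qed

end
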